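(* Let $s_\mathrm{in}>0$, let $\mu:[0,s_\mathrm{in}]\to[0,\infty)$ be continuously differentiable with $\mu(0)=0$, fix $\bar s\in(0,s_\mathrm{in})$ and numbers $0<D_{\min}<\mu(\bar s)<D_{\max}$. Consider the chemostat $\dot s=-\mu(s)b+D(s_\mathrm{in}-s)$, $\dot b=\mu(s)b-Db$ with the dynamic feedback $$D=\operatorname{sat}_{[D_{\min},D_{\max}]}\big(\bar D-G_1(s-\bar s)\big),\qquad \frac{d}{dt}\bar D=-G_2(s-\bar s)(\bar D-D_{\min})(D_{\max}-\bar D).$$ Then for any constants $G_1>0$, $G_2>0$ with $G_1>-\mu'(\bar s)$, the equilibrium $(s,b,\bar D)=(\bar s,\,s_\mathrm{in}-\bar s,\,\mu(\bar s))$ of the closed-loop system is locally exponentially stable; in particular, for solutions starting sufficiently close to it, $s(t)\to\bar s$ and $\lim_{t\to\infty}\bar D(t)=\lim_{t\to\infty}D(t)=\mu(\bar s)$.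
   Context: The saturation function is $\operatorname{sat}_{[D_{\min},D_{\max}]}(x)=D_{\max}$ if $x>D_{\max}$, $=x$ if $x\in[D_{\min},D_{\max}]$, $=D_{\min}$ if $x<D_{\min}$. *)

theory Defs
  imports "HOL-Analysis.Analysis"
begin

definition sat :: "real \<Rightarrow> real \<Rightarrow> real \<Rightarrow> real" where
  "sat Dmin Dmax x = (if x > Dmax then Dmax else if x < Dmin then Dmin else x)"

definition feedbackD :: "real \<Rightarrow> real \<Rightarrow> real \<Rightarrow> real \<Rightarrow> real \<Rightarrow> real \<Rightarrow> real" where
  "feedbackD Dmin Dmax G1 sbar s Dbar = sat Dmin Dmax (Dbar - G1 * (s - sbar))"

definition cl_solution ::
  "(real \<Rightarrow> real) \<Rightarrow> real \<Rightarrow> real \<Rightarrow> real \<Rightarrow> real \<Rightarrow> real \<Rightarrow> real \<Rightarrow> real \<Rightarrow>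
   (real \<Rightarrow> real) \<Rightarrow> (real \<Rightarrow> real) \<Rightarrow> (real \<Rightarrow> real) \<Rightarrow> bool" where
  "cl_solution \<mu> s_in sbar Dmin Dmax G1 G2 T s b Db \<longleftrightarrow>
     (\<forall>t\<in>{0..T}. s t \<in> {0..s_in} \<and>
        (let D = feedbackD Dmin Dmax G1 sbar (s t) (Db t) in
          (s has_real_derivative (- \<mu> (s t) * b t + D * (s_in - s t))) (at t within {0..T}) \<and>
          (b has_real_derivative (\<mu> (s t) * b t - D * b t)) (at t within {0..T}) \<and>
          (Db has_real_derivative (- G2 * (s t - sbar) * (Db t - Dmin) * (Dmax - Db t)))
             (at t within {0..T})))"

definition eq_dist ::
  "(real \<Rightarrow> real) \<Rightarrow> real \<Rightarrow> real \<Rightarrow> (real \<Rightarrow> real) \<Rightarrow> (real \<Rightarrow> real) \<Rightarrow> (real \<Rightarrow> real) \<Rightarrow> real \<Rightarrow> real" where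
  "eq_dist \<mu> s_in sbar s b Db t =
     sqrt ((s t - sbar)^2 + (b t - (s_in - sbar))^2 + (Db t - \<mu> sbar)^2)"

definition cl_locally_exp_stable ::
  "(real \<Rightarrow> real) \<Rightarrow> real \<Rightarrow> real \<Rightarrow> real \<Rightarrow> real \<Rightarrow> real \<Rightarrow> real \<Rightarrow> bool" where
  "cl_locally_exp_stable \<mu> s_in sbar Dmin Dmax G1 G2 \<longleftrightarrow>
     (\<exists>\<delta>>0. \<exists>c>0. \<exists>r>0. \<forall>T\<ge>0. \<forall>s b Db.
        cl_solution \<mu> s_in sbar Dmin Dmax G1 G2 T s b Db \<and> eq_dist \<mu> s_in sbar s b Db 0 < \<delta> \<longrightarrow>
        (\<forall>t\<in>{0..T}. eq_dist \<mu> s_in sbar s b Db t \<le> c * exp (- r * t) * eq_dist \<mu> s_in sbar s b Db 0))"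

end

theory Submission
  imports Defs
begin

lemma decay_step:
  fixes V V' :: "real \<Rightarrow> real"
  assumes contV: "continuous_on {0..T} V"
    and derV: "\<And>t. 0 < t \<Longrightarrow> t < T \<Longrightarrow> V t < \<epsilon> \<Longrightarrow> (V has_real_derivative V' t) (at t) \<and> V' t \<le> - a * V t"
    and t: "0 < t" "t \<le> T"
    and below: "\<And>u. 0 < u \<Longrightarrow> u < t \<Longrightarrow> V u < \<epsilon>"
  shows "V t \<le> V 0 * exp (- a * t)"
proof -
  define W where "W u = V u * exp (a * u)" for u
  have cW: "continuous_on {0..t} W"
    unfolding W_def
    by (intro continuous_intros continuous_on_subset[OF contV]) (use t in auto)
  have dW: "(W has_real_derivative (V' u * exp (a*u) + V u * (exp (a*u) * a))) (at u)"
    if "0 < u" "u < t" for u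
  proof -
    have "(V has_real_derivative V' u) (at u)" using derV[of u] below[of u] that t by auto
    then show ?thesis unfolding W_def
      by (auto intro!: derivative_eq_intros)
  qed
  obtain l z where lz: "0 < z" "z < t" "DERIV W z :> l" "W t - W 0 = (t - 0) * l"
    using MVT[OF t(1) cW] dW by (meson real_differentiable_def)
  have "l = V' z * exp (a*z) + V z * (exp (a*z) * a)"
    using DERIV_unique[OF lz(3) dW[OF lz(1,2)]] .
  also have "\<dots> = exp (a*z) * (V' z + a * V z)" by (simp add: algebra_simps)
  also have "\<dots> \<le> 0"
  proof -
    have "V' z + a * V z \<le> 0" using derV[of z] below[of z] lz t by auto
    then show ?thesis by (simp add: mult_nonneg_nonpos)
  qed
  finally have "t * l \<le> 0" using t by (simp add: mult_nonneg_nonpos)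
  then have "W t \<le> W 0" using lz(4) by simp
  then have "V t * exp (a*t) \<le> V 0" unfolding W_def by simp
  then have "V t * exp (a*t) * exp (-a*t) \<le> V 0 * exp (-a*t)"
    by (simp add: mult_right_mono)
  then show ?thesis by (simp add: mult.assoc flip: exp_add)
qed

lemma decay:
  fixes V V' :: "real \<Rightarrow> real"
  assumes contV: "continuous_on {0..T} V"
    and derV: "\<And>t. 0 < t \<Longrightarrow> t < T \<Longrightarrow> V t < \<epsilon> \<Longrightarrow> (V has_real_derivative V' t) (at t) \<and> V' t \<le> - a * V t"
    and V0: "0 \<le> V 0" "V 0 < \<epsilon>" and a: "a \<ge> 0"
  shows "\<forall>t\<in>{0..T}. V t \<le> V 0 * exp (- a * t)"
proof -
  have all: "V t < \<epsilon>" if t: "t \<in> {0..T}" for t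
  proof (rule ccontr)
    assume "\<not> V t < \<epsilon>"
    define c where "c = (V 0 + \<epsilon>) / 2"
    have c: "V 0 < c" "c < \<epsilon>" using V0 unfolding c_def by auto
    define S where "S = {0..t} \<inter> V -` {c..}"
    have cS: "closed S" unfolding S_def
      by (intro continuous_closed_preimage continuous_on_subset[OF contV]) (use t in auto)
    have "t \<in> S" using \<open>\<not> V t < \<epsilon>\<close> c t unfolding S_def by auto
    then have "S \<noteq> {}" by auto
    moreover have "bdd_below S" unfolding S_def by (auto intro: bdd_belowI[of _ 0])
    ultimately have t1S: "Inf S \<in> S" using cS closed_contains_Inf by blast
    define t1 where "t1 = Inf S"
    have t1: "0 \<le> t1" "t1 \<le> t" "V t1 \<ge> c" using t1S unfolding S_def t1_def by auto
    have "t1 \<noteq> 0" using t1 c by auto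
    with t1 have t1p: "0 < t1" by auto
    have bel: "V u < \<epsilon>" if "0 < u" "u < t1" for u
    proof -
      have "u \<notin> S"
        using that cInf_lower[OF _ \<open>bdd_below S\<close>, of u] unfolding t1_def by force
      then show ?thesis using that t1 c unfolding S_def by auto
    qed
    have "V t1 \<le> V 0 * exp (- a * t1)"
      by (rule decay_step[OF contV derV t1p]) (use t1 t bel in auto)
    also have "\<dots> \<le> V 0" using V0 a t1 by (simp add: mult_left_le)
    finally show False using t1 c by auto
  qed
  show ?thesis
  proof
    fix t assume t: "t \<in> {0..T}"
    show "V t \<le> V 0 * exp (- a * t)"
    proof (cases "t = 0")
      case True then show ?thesis by simp
    next
      case False
      show ?thesis
      proof (rule decay_step[OF contV])
        show "\<And>t. 0 < t \<Longrightarrow> t < T \<Longrightarrow> V t < \<epsilon> \<Longrightarrow> (V has_real_derivative V' t) (at t) \<and> V' t \<le> - a * V t"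
          by (rule derV)
      qed (use t all False in auto)
    qed
  qed
qed

lemma prod_le_abs: "(a::real)*b \<le> \<bar>a\<bar>*\<bar>b\<bar>" "-(a*b) \<le> \<bar>a\<bar>*\<bar>b\<bar>"
  by (simp_all add: abs_mult[symmetric] abs_ge_self abs_ge_minus_self)

lemma Qderiv_bound:
  fixes k g B c M mub Dmin D e z y Re Rz th1 th2 :: real
  assumes k: "k > 0" and g: "g > 0" and B: "B > 0" and Dmin: "Dmin > 0" and mub: "mub \<ge> 0"
    and c: "c = B + g^2 / (2*k)"
    and hM: "2*M*Dmin \<ge> 4*k*mub^2/g + g*mub^2/B + 1"
    and hD: "D \<ge> Dmin"
    and hRe: "\<bar>Re\<bar> \<le> th1 * \<bar>e\<bar>" and hRz: "\<bar>Rz\<bar> \<le> th2 * \<bar>e\<bar>"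
    and th: "th1 \<ge> 0" "th2 \<ge> 0"
    and hT1: "(2*k+g/2)*th1 + (g+c)*th2 \<le> k*g/4"
    and hT2: "(2*k+g/2)*th1 + (g+c)*th2 \<le> g*B/4"
  shows "2*k*e*(-g*e + B*z - mub*y + Re) - g*((-g*e + B*z - mub*y + Re)*z + e*(-k*e + Rz))
          + 2*c*z*(-k*e+Rz) + 2*M*y*(-D*y) \<le> -(k*g/2)*e^2 - (g*B/2)*z^2 - y^2"
proof -
  define Th where "Th = (2*k+g/2)*th1 + (g+c)*th2"
  have c0: "c > 0" using c k B by (simp add: add_pos_nonneg)
  have id: "2*k*e*(-g*e + B*z - mub*y + Re) - g*((-g*e + B*z - mub*y + Re)*z + e*(-k*e + Rz))
          + 2*c*z*(-k*e+Rz) + 2*M*y*(-D*y) =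
     -k*g*e^2 - g*B*z^2 + (-2*k*mub*e*y + g*mub*y*z) + (2*k*e*Re - g*Re*z - g*e*Rz + 2*c*z*Rz) - 2*M*D*y^2"
    using k unfolding c by (simp add: field_simps power2_eq_square)
  have y1: "-2*k*mub*e*y \<le> (k*g/4)*e^2 + (4*k*mub^2/g)*y^2"
  proof -
    have "0 \<le> (k/g)*((g/2)*e + 2*mub*y)^2" using k g by simp
    also have "\<dots> = (k*g/4)*e^2 + (4*k*mub^2/g)*y^2 + 2*k*mub*e*y"
      using g by (simp add: field_simps power2_eq_square)
    finally show ?thesis by simp
  qed
  have y2: "g*mub*y*z \<le> (g*B/4)*z^2 + (g*mub^2/B)*y^2"
  proof -
    have "0 \<le> (g/B)*((B/2)*z - mub*y)^2" using B g by simp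
    also have "\<dots> = (g*B/4)*z^2 + (g*mub^2/B)*y^2 - g*mub*y*z"
      using B by (simp add: field_simps power2_eq_square)
    finally show ?thesis by simp
  qed
  have ae: "\<bar>e\<bar>*\<bar>z\<bar> \<le> (e^2 + z^2)/2"
  proof -
    have "0 \<le> (\<bar>e\<bar> - \<bar>z\<bar>)^2" by simp
    then show ?thesis by (simp add: power2_eq_square algebra_simps)
  qed
  have r1: "2*k*e*Re \<le> 2*k*th1*e^2"
  proof -
    have "2*k*e*Re \<le> 2*k*(\<bar>e\<bar>*\<bar>Re\<bar>)" using k by (simp add: abs_mult[symmetric] mult.assoc)
    also have "\<dots> \<le> 2*k*(\<bar>e\<bar>*(th1*\<bar>e\<bar>))" using k hRe by (intro mult_left_mono) auto
    finally show ?thesis by (simp add: power2_eq_square algebra_simps)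
  qed
  have r2: "- g*Re*z \<le> g*th1*((e^2 + z^2)/2)"
  proof -
    have "- g*Re*z \<le> g*(\<bar>Re\<bar>*\<bar>z\<bar>)" using g
      using mult_left_mono[OF prod_le_abs(2)[of Re z], of g] g by simp
    also have "\<dots> \<le> g*(th1*\<bar>e\<bar>*\<bar>z\<bar>)" using g hRe by (intro mult_left_mono mult_right_mono) auto
    also have "\<dots> = g*th1*(\<bar>e\<bar>*\<bar>z\<bar>)" by simp
    also have "\<dots> \<le> g*th1*((e^2 + z^2)/2)" using g th ae by (intro mult_left_mono) auto
    finally show ?thesis .
  qed
  have r3: "- g*e*Rz \<le> g*th2*e^2"
  proof -
    have "- g*e*Rz \<le> g*(\<bar>e\<bar>*\<bar>Rz\<bar>)" using g
      using mult_left_mono[OF prod_le_abs(2)[of e Rz], of g] g by simp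
    also have "\<dots> \<le> g*(\<bar>e\<bar>*(th2*\<bar>e\<bar>))" using g hRz by (intro mult_left_mono) auto
    finally show ?thesis by (simp add: power2_eq_square algebra_simps)
  qed
  have r4: "2*c*z*Rz \<le> 2*c*th2*((e^2 + z^2)/2)"
  proof -
    have "2*c*z*Rz \<le> 2*c*(\<bar>z\<bar>*\<bar>Rz\<bar>)" using c0 by (simp add: abs_mult[symmetric] mult.assoc)
    also have "\<dots> \<le> 2*c*(th2*\<bar>e\<bar>*\<bar>z\<bar>)" using c0 hRz
      by (intro mult_left_mono) (auto simp: mult.commute[of "\<bar>z\<bar>"] intro: mult_right_mono)
    also have "\<dots> = 2*c*th2*(\<bar>e\<bar>*\<bar>z\<bar>)" by simp
    also have "\<dots> \<le> 2*c*th2*((e^2 + z^2)/2)" using c0 th ae by (intro mult_left_mono) auto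
    finally show ?thesis .
  qed
  have R: "2*k*e*Re - g*Re*z - g*e*Rz + 2*c*z*Rz \<le> Th*e^2 + Th*z^2"
  proof -
    have "2*k*e*Re - g*Re*z - g*e*Rz + 2*c*z*Rz \<le>
          2*k*th1*e^2 + g*th1*((e^2 + z^2)/2) + g*th2*e^2 + 2*c*th2*((e^2 + z^2)/2)"
      using r1 r2 r3 r4 by linarith
    also have "\<dots> = Th*e^2 + (g*th1/2 + c*th2)*z^2" unfolding Th_def by (simp add: field_simps)
    also have "\<dots> \<le> Th*e^2 + Th*z^2"
    proof -
      have "g*th1/2 + c*th2 \<le> Th" unfolding Th_def using k th g
        by (simp add: algebra_simps add_nonneg_nonneg mult_nonneg_nonneg)
      then show ?thesis by (simp add: mult_right_mono)
    qed
    finally show ?thesis .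
  qed
  have T1: "Th*e^2 \<le> (k*g/4)*e^2" using hT1 unfolding Th_def[symmetric] by (rule mult_right_mono) simp
  have T2: "Th*z^2 \<le> (g*B/4)*z^2" using hT2 unfolding Th_def[symmetric] by (rule mult_right_mono) simp
  have M0: "M \<ge> 0"
  proof -
    have "4*k*mub^2/g + g*mub^2/B \<ge> 0" using k g B by simp
    then have "2*M*Dmin > 0" using hM by linarith
    then show ?thesis using Dmin by (simp add: zero_less_mult_iff)
  qed
  have Dy: "- 2*M*D*y^2 \<le> -2*M*Dmin*y^2" using hD M0 by (simp add: mult_left_mono mult_right_mono)
  have hMy: "(4*k*mub^2/g)*y^2 + (g*mub^2/B)*y^2 - 2*M*Dmin*y^2 \<le> -(y^2)"
  proof -
    have "(4*k*mub^2/g + g*mub^2/B + 1 - 2*M*Dmin)*y^2 \<le> 0"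
      using hM by (simp add: mult_nonpos_nonneg)
    then show ?thesis by (simp add: algebra_simps)
  qed
  have eqs: "k*g/4*e^2 = (k*g*e^2)/4" "g*B/4*z^2 = (g*B*z^2)/4" "-(k*g/2)*e^2 = -(k*g*e^2)/2"
    "(g*B/2)*z^2 = (g*B*z^2)/2" "-k*g*e^2 = -(k*g*e^2)" by simp_all
  show ?thesis unfolding id using y1 y2 R T1 T2 Dy hMy eqs by linarith
qed

lemma Re_bound:
  fixes e z y rho B p G1 mb d1 :: real
  assumes hr: "\<bar>rho\<bar> \<le> d1*\<bar>e\<bar>" and he: "\<bar>e\<bar> \<le> d1" and hz: "\<bar>z\<bar> \<le> d1" and hy: "\<bar>y\<bar> \<le> d1"
    and d1: "d1 \<le> 1" "0 \<le> d1" and B: "B > 0"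
  shows "\<bar>-(mb + p*e + rho)*(B - e + y) + (mb + z - G1*e)*(B - e) - (-(B*(G1+p))*e + B*z - mb*y)\<bar>
         \<le> (B + 3 + \<bar>G1+p\<bar> + \<bar>p\<bar>)*d1*\<bar>e\<bar>"
proof -
  have id: "-(mb + p*e + rho)*(B - e + y) + (mb + z - G1*e)*(B - e) - (-(B*(G1+p))*e + B*z - mb*y)
     = -(B*rho) - e*z + (G1+p)*(e*e) + e*rho - p*(e*y) - rho*y"
    by (simp add: algebra_simps)
  have ae: "\<bar>e\<bar> \<ge> 0" by simp
  have t1: "\<bar>B*rho\<bar> \<le> B*(d1*\<bar>e\<bar>)" using B hr by (simp add: abs_mult)
  have t2: "\<bar>e*z\<bar> \<le> d1*\<bar>e\<bar>"
    using mult_left_mono[OF hz, of "\<bar>e\<bar>"] by (simp add: abs_mult mult.commute)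
  have t3: "\<bar>(G1+p)*(e*e)\<bar> \<le> \<bar>G1+p\<bar>*(d1*\<bar>e\<bar>)"
  proof -
    have "\<bar>e\<bar>*\<bar>e\<bar> \<le> d1*\<bar>e\<bar>" using mult_right_mono[OF he, of "\<bar>e\<bar>"] by simp
    then have "\<bar>G1+p\<bar>*(\<bar>e\<bar>*\<bar>e\<bar>) \<le> \<bar>G1+p\<bar>*(d1*\<bar>e\<bar>)" by (simp add: mult_left_mono)
    then show ?thesis by (simp add: abs_mult)
  qed
  have t4: "\<bar>e*rho\<bar> \<le> d1*\<bar>e\<bar>"
  proof -
    have "\<bar>e*rho\<bar> = \<bar>e\<bar>*\<bar>rho\<bar>" by (simp add: abs_mult)
    also have "\<dots> \<le> 1*(d1*\<bar>e\<bar>)" using he d1 hr by (intro mult_mono) auto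
    finally show ?thesis by simp
  qed
  have t5: "\<bar>p*(e*y)\<bar> \<le> \<bar>p\<bar>*(d1*\<bar>e\<bar>)"
  proof -
    have "\<bar>e\<bar>*\<bar>y\<bar> \<le> d1*\<bar>e\<bar>" using mult_left_mono[OF hy, of "\<bar>e\<bar>"] by (simp add: mult.commute)
    then show ?thesis by (simp add: abs_mult mult_left_mono)
  qed
  have t6: "\<bar>rho*y\<bar> \<le> d1*\<bar>e\<bar>"
  proof -
    have "\<bar>rho*y\<bar> = \<bar>rho\<bar>*\<bar>y\<bar>" by (simp add: abs_mult)
    also have "\<dots> \<le> (d1*\<bar>e\<bar>)*1" using hy d1 hr by (intro mult_mono) auto
    finally show ?thesis by simp
  qed
  have "\<bar>-(B*rho) - e*z + (G1+p)*(e*e) + e*rho - p*(e*y) - rho*y\<bar>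
     \<le> \<bar>B*rho\<bar> + \<bar>e*z\<bar> + \<bar>(G1+p)*(e*e)\<bar> + \<bar>e*rho\<bar> + \<bar>p*(e*y)\<bar> + \<bar>rho*y\<bar>"
    unfolding abs_le_iff
    using abs_ge_self[of "B*rho"] abs_ge_minus_self[of "B*rho"] abs_ge_self[of "e*z"] abs_ge_minus_self[of "e*z"]
      abs_ge_self[of "(G1+p)*(e*e)"] abs_ge_minus_self[of "(G1+p)*(e*e)"]
      abs_ge_self[of "e*rho"] abs_ge_minus_self[of "e*rho"] abs_ge_self[of "p*(e*y)"] abs_ge_minus_self[of "p*(e*y)"]
      abs_ge_self[of "rho*y"] abs_ge_minus_self[of "rho*y"] by linarith
  also have "\<dots> \<le> (B + 3 + \<bar>G1+p\<bar> + \<bar>p\<bar>)*(d1*\<bar>e\<bar>)"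
    using t1 t2 t3 t4 t5 t6 by (simp add: algebra_simps)
  finally show ?thesis unfolding id by (simp add: mult.assoc)
qed

lemma Rz_bound:
  fixes e z G2 mb Dmin Dmax d1 :: real
  assumes hz: "\<bar>z\<bar> \<le> d1" and d1: "d1 \<le> 1" and G2: "G2 > 0"
  shows "\<bar>- G2 * e * (mb + z - Dmin) * (Dmax - (mb + z)) + G2*(mb - Dmin)*(Dmax - mb) * e\<bar>
     \<le> G2*(\<bar>(Dmax - mb) - (mb - Dmin)\<bar> + 1)*d1*\<bar>e\<bar>"
proof -
  define q where "q = (Dmax - mb) - (mb - Dmin)"
  have id: "- G2 * e * (mb + z - Dmin) * (Dmax - (mb + z)) + G2*(mb - Dmin)*(Dmax - mb) * e
     = - (G2*e*(z*(q - z)))" unfolding q_def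
    by (simp add: algebra_simps)
  have "\<bar>q - z\<bar> \<le> \<bar>q\<bar> + 1" using hz d1 by linarith
  then have "\<bar>z*(q - z)\<bar> \<le> d1*(\<bar>q\<bar> + 1)" using hz by (simp add: abs_mult mult_mono)
  then have "G2*\<bar>e\<bar>*\<bar>z*(q - z)\<bar> \<le> G2*\<bar>e\<bar>*(d1*(\<bar>q\<bar> + 1))" using G2
    by (intro mult_left_mono) auto
  moreover have "\<bar>- (G2*e*(z*(q - z)))\<bar> = G2*\<bar>e\<bar>*\<bar>z*(q - z)\<bar>" using G2 by (simp add: abs_mult)
  ultimately show ?thesis unfolding id q_def[symmetric] by (simp add: algebra_simps)
qed

lemma Q_lower:
  fixes k g B c M e z y :: real
  assumes k: "k > 0" and B: "B > 0" and M: "M > 0" and c: "c = B + g^2/(2*k)"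
  shows "min (min (k/2) B) M * (e^2 + z^2 + y^2) \<le> k*e^2 - g*e*z + c*z^2 + M*y^2"
proof -
  have sq: "k*e^2 - g*e*z + c*z^2 + M*y^2 = (k/2)*e^2 + B*z^2 + M*y^2 + (1/(2*k))*(k*e - g*z)^2"
    using k unfolding c by (simp add: field_simps power2_eq_square)
  have "0 \<le> (1/(2*k))*(k*e - g*z)^2" using k by simp
  moreover have "min (min (k/2) B) M * e^2 \<le> (k/2)*e^2" by (intro mult_right_mono) auto
  moreover have "min (min (k/2) B) M * z^2 \<le> B*z^2" by (intro mult_right_mono) auto
  moreover have "min (min (k/2) B) M * y^2 \<le> M*y^2" by (intro mult_right_mono) auto
  ultimately show ?thesis unfolding sq by (simp add: algebra_simps)
qed

lemma Q_upper:
  fixes k g B c M e z y :: real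
  assumes k: "k > 0" and g: "g > 0" and M: "M > 0" and c: "c > 0"
  shows "k*e^2 - g*e*z + c*z^2 + M*y^2 \<le> (k + g + c + M) * (e^2 + z^2 + y^2)"
proof -
  have "- (e*z) \<le> e^2 + z^2"
  proof -
    have "0 \<le> (e+z)*(e+z)" "0 \<le> e*e" "0 \<le> z*z" by simp_all
    moreover have "(e+z)*(e+z) = e*e + 2*(e*z) + z*z" by (simp add: algebra_simps)
    ultimately show ?thesis unfolding power2_eq_square by linarith
  qed
  then have "g*(-(e*z)) \<le> g*(e^2+z^2)" using g by (intro mult_left_mono) auto
  moreover have "0 \<le> k*(z^2+y^2)" "0 \<le> g*y^2" "0 \<le> c*(e^2+y^2)" "0 \<le> M*(e^2+z^2)"
    using k g c M by auto
  ultimately show ?thesis by (simp add: algebra_simps)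
qed

lemma dist_equiv:
  fixes e z y :: real
  shows "e^2 + (y - e)^2 + z^2 \<le> 3*(e^2 + z^2 + y^2)"
    and "e^2 + z^2 + y^2 \<le> 3*(e^2 + (y - e)^2 + z^2)"
proof -
  have a: "(y - e)^2 \<le> 2*y^2 + 2*e^2"
  proof -
    have "0 \<le> (y + e)^2" by simp
    then show ?thesis by (simp add: power2_eq_square algebra_simps)
  qed
  have b: "y^2 \<le> 2*(y-e)^2 + 2*e^2"
  proof -
    have "0 \<le> ((y - e) - e)^2" by simp
    then show ?thesis by (simp add: power2_eq_square algebra_simps)
  qed
  have "0 \<le> z^2" "0 \<le> y^2" by simp_all
  then show "e^2 + (y - e)^2 + z^2 \<le> 3*(e^2 + z^2 + y^2)" using a unfolding distrib_left by linarith
  have "0 \<le> z^2" "0 \<le> (y-e)^2" by simp_all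
  then show "e^2 + z^2 + y^2 \<le> 3*(e^2 + (y - e)^2 + z^2)" using b unfolding distrib_left by linarith
qed

lemma sat_fix: "Dmin \<le> x \<Longrightarrow> x \<le> Dmax \<Longrightarrow> sat Dmin Dmax x = x"
  unfolding sat_def by auto

lemma sat_ge: "Dmin < Dmax \<Longrightarrow> sat Dmin Dmax x \<ge> Dmin"
  unfolding sat_def by auto

lemma sat_lip: "Dmin < Dmax \<Longrightarrow> \<bar>sat Dmin Dmax x - sat Dmin Dmax y\<bar> \<le> \<bar>x - y\<bar>"
  unfolding sat_def by auto


theorem proposition2:
  fixes \<mu> \<mu>' :: "real \<Rightarrow> real" and s_in sbar Dmin Dmax G1 G2 :: real
  assumes s_in_pos: "s_in > 0"
    and mu_deriv: "\<And>x. x \<in> {0..s_in} \<Longrightarrow> (\<mu> has_real_derivative \<mu>' x) (at x within {0..s_in})"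
    and mu'_cont: "continuous_on {0..s_in} \<mu>'"
    and mu_nonneg: "\<And>x. x \<in> {0..s_in} \<Longrightarrow> \<mu> x \<ge> 0"
    and mu0: "\<mu> 0 = 0"
    and sbar: "0 < sbar" "sbar < s_in"
    and Dbounds: "0 < Dmin" "Dmin < \<mu> sbar" "\<mu> sbar < Dmax"
    and gains: "G1 > 0" "G2 > 0" "G1 > - \<mu>' sbar"
  shows "cl_locally_exp_stable \<mu> s_in sbar Dmin Dmax G1 G2 \<and>
    (\<exists>\<delta>>0. \<forall>s b Db.
       (\<forall>T\<ge>0. cl_solution \<mu> s_in sbar Dmin Dmax G1 G2 T s b Db) \<and>
       eq_dist \<mu> s_in sbar s b Db 0 < \<delta> \<longrightarrow>
       (s \<longlongrightarrow> sbar) at_top \<and> (Db \<longlongrightarrow> \<mu> sbar) at_top \<and>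
       ((\<lambda>t. feedbackD Dmin Dmax G1 sbar (s t) (Db t)) \<longlongrightarrow> \<mu> sbar) at_top)"
proof -
  define B where "B = s_in - sbar"
  define mb where "mb = \<mu> sbar"
  define p where "p = \<mu>' sbar"
  define g where "g = B*(G1+p)"
  define c1 where "c1 = mb - Dmin"
  define c2 where "c2 = Dmax - mb"
  define k where "k = G2*c1*c2"
  define c where "c = B + g^2/(2*k)"
  define M where "M = (4*k*mb^2/g + g*mb^2/B + 1)/(2*Dmin)"
  define L where "L = B + 3 + \<bar>G1+p\<bar> + \<bar>p\<bar>"
  define L2 where "L2 = G2*(\<bar>c2 - c1\<bar> + 1)"
  define K where "K = (2*k+g/2)*L + (g+c)*L2"
  define th0 where "th0 = min (k*g/4) (g*B/4)"
  define d1 where "d1 = min 1 (th0/K)"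
  have B: "B > 0" using sbar unfolding B_def by simp
  have g: "g > 0" unfolding g_def p_def using B gains by simp
  have c1: "c1 > 0" and c2: "c2 > 0" unfolding c1_def c2_def mb_def using Dbounds by auto
  have k: "k > 0" unfolding k_def using gains c1 c2 by simp
  have c: "c > 0" unfolding c_def using B k by (simp add: add_pos_nonneg)
  have mb: "mb \<ge> 0" unfolding mb_def using Dbounds by simp
  have M: "M > 0" unfolding M_def using k g B mb Dbounds by (simp add: add_nonneg_pos)
  have hM: "2*M*Dmin \<ge> 4*k*mb^2/g + g*mb^2/B + 1" unfolding M_def using Dbounds by (simp add: field_simps)
  have L: "L > 0" unfolding L_def using B by simp
  have L2: "L2 > 0" unfolding L2_def using gains by (simp add: add_nonneg_pos)
  have K: "K > 0" unfolding K_def using k g c L L2 by (simp add: add_pos_pos)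
  have th0: "th0 > 0" unfolding th0_def using k g B by simp
  have d1: "d1 > 0" "d1 \<le> 1" "d1*K \<le> th0" unfolding d1_def using th0 K
    by (auto simp: min_def field_simps)
  have Kd1: "(2*k+g/2)*(L*d1) + (g+c)*(L2*d1) = K*d1" unfolding K_def by (simp add: algebra_simps)
  obtain dr where dr: "dr > 0"
    and rho: "\<And>x. x \<in> {0..s_in} \<Longrightarrow> \<bar>x - sbar\<bar> < dr \<Longrightarrow> \<bar>\<mu> x - mb - p*(x - sbar)\<bar> \<le> d1*\<bar>x - sbar\<bar>"
  proof -
    have "(\<mu> has_real_derivative p) (at sbar within {0..s_in})"
      unfolding p_def using mu_deriv sbar by auto
    then have "((\<lambda>y. (\<mu> y - \<mu> sbar) / (y - sbar)) \<longlongrightarrow> p) (at sbar within {0..s_in})"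
      by (simp add: has_field_derivative_iff)
    then have "eventually (\<lambda>y. dist ((\<mu> y - \<mu> sbar) / (y - sbar)) p < d1) (at sbar within {0..s_in})"
      using d1(1) tendsto_iff by metis
    then obtain d where d: "d > 0" and hd: "\<And>y. y \<in> {0..s_in} \<Longrightarrow> y \<noteq> sbar \<Longrightarrow> dist y sbar < d \<Longrightarrow>
        dist ((\<mu> y - \<mu> sbar) / (y - sbar)) p < d1"
      unfolding eventually_at by blast
    show ?thesis
    proof (rule that[OF d])
      fix x assume x: "x \<in> {0..s_in}" "\<bar>x - sbar\<bar> < d"
      show "\<bar>\<mu> x - mb - p*(x - sbar)\<bar> \<le> d1*\<bar>x - sbar\<bar>"
      proof (cases "x = sbar")
        case True then show ?thesis unfolding mb_def by simp
      next
        case False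
        then have ne: "x - sbar \<noteq> 0" by simp
        have "\<bar>(\<mu> x - mb) / (x - sbar) - p\<bar> < d1"
          using hd[OF x(1) False] x(2) unfolding mb_def dist_real_def by simp
        moreover have "\<mu> x - mb - p*(x - sbar) = ((\<mu> x - mb) / (x - sbar) - p) * (x - sbar)"
          using ne by (simp add: field_simps)
        ultimately show ?thesis by (simp add: abs_mult mult_right_mono)
      qed
    qed
  qed
  define d0 where "d0 = min d1 (min dr (min (c1/(1+G1)) (c2/(1+G1))))"
  have d0: "d0 > 0" "d0 \<le> d1" "d0 \<le> dr" "(1+G1)*d0 \<le> c1" "(1+G1)*d0 \<le> c2"
  proof -
    have h: "d0 \<le> c1/(1+G1)" "d0 \<le> c2/(1+G1)" unfolding d0_def by auto
    have G: "1 + G1 > 0" using gains by simp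
    have "(1+G1)*d0 \<le> (1+G1)*(c1/(1+G1))" "(1+G1)*d0 \<le> (1+G1)*(c2/(1+G1))"
      using h G by (intro mult_left_mono; simp)+
    then show "(1+G1)*d0 \<le> c1" "(1+G1)*d0 \<le> c2" using G by simp_all
    show "d0 > 0" unfolding d0_def using d1 dr c1 c2 G by simp
    show "d0 \<le> d1" "d0 \<le> dr" unfolding d0_def by auto
  qed
  define m0 where "m0 = min (min (k/2) B) M"
  define M0 where "M0 = k + g + c + M"
  define eps where "eps = m0 * d0^2"
  define a0 where "a0 = min (min (k*g/2) (g*B/2)) 1"
  define a where "a = a0 / M0"
  define del where "del = sqrt (eps / (3*M0))"
  define C where "C = 3 * sqrt (M0/m0)"
  define r where "r = a/2"
  have m0: "m0 > 0" unfolding m0_def using k B M by simp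
  have M0: "M0 > 0" unfolding M0_def using k g c M by simp
  have eps: "eps > 0" unfolding eps_def using m0 d0 by simp
  have a0: "a0 > 0" unfolding a0_def using k g B by simp
  have a: "a > 0" unfolding a_def using a0 M0 by simp
  have del: "del > 0" unfolding del_def using eps M0 by simp
  have C: "C > 0" unfolding C_def using M0 m0 by simp
  have r: "r > 0" unfolding r_def using a by simp
  have key: "\<forall>t\<in>{0..T}. eq_dist \<mu> s_in sbar s b Db t \<le> C * exp (- r * t) * eq_dist \<mu> s_in sbar s b Db 0"
    if T: "T \<ge> 0" and sol: "cl_solution \<mu> s_in sbar Dmin Dmax G1 G2 T s b Db"
      and start: "eq_dist \<mu> s_in sbar s b Db 0 < del" for T s b Db
  proof -
    note sol' = sol[unfolded cl_solution_def Let_def]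
    define Dt where "Dt t = feedbackD Dmin Dmax G1 sbar (s t) (Db t)" for t
    define sdv where "sdv t = - \<mu> (s t) * b t + Dt t * (s_in - s t)" for t
    define bdv where "bdv t = \<mu> (s t) * b t - Dt t * b t" for t
    define Dbd where "Dbd t = - G2 * (s t - sbar) * (Db t - Dmin) * (Dmax - Db t)" for t
    have sin: "s t \<in> {0..s_in}" if "t \<in> {0..T}" for t using sol' that by auto
    have ds: "(s has_real_derivative sdv t) (at t within {0..T})" if "t \<in> {0..T}" for t
      using sol' that unfolding sdv_def Dt_def by auto
    have db: "(b has_real_derivative bdv t) (at t within {0..T})" if "t \<in> {0..T}" for t
      using sol' that unfolding bdv_def Dt_def by auto
    have dDb: "(Db has_real_derivative Dbd t) (at t within {0..T})" if "t \<in> {0..T}" for t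
      using sol' that unfolding Dbd_def by auto
    define V where "V t = k*(s t - sbar)^2 - g*(s t - sbar)*(Db t - mb) + c*(Db t - mb)^2 + M*(s t + b t - s_in)^2" for t
    define V' where "V' t = 2*k*(s t - sbar) * sdv t - g*(sdv t*(Db t - mb) + (s t - sbar)*Dbd t)
       + 2*c*(Db t - mb)*Dbd t + 2*M*(s t + b t - s_in)*(sdv t + bdv t)" for t
    define N where "N t = (s t - sbar)^2 + (Db t - mb)^2 + (s t + b t - s_in)^2" for t
    define X where "X t = (s t - sbar)^2 + (b t - (s_in - sbar))^2 + (Db t - \<mu> sbar)^2" for t
    have eqd: "eq_dist \<mu> s_in sbar s b Db t = sqrt (X t)" for t unfolding eq_dist_def X_def ..
    have dV: "(V has_real_derivative V' t) (at t within {0..T})" if "t \<in> {0..T}" for t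
      unfolding V_def V'_def
      by (rule derivative_eq_intros ds[OF that] db[OF that] dDb[OF that] refl | simp add: algebra_simps)+
    have contV: "continuous_on {0..T} V" using dV by (rule DERIV_continuous_on)
    have Vlow: "m0 * N t \<le> V t" for t
      unfolding m0_def N_def V_def using Q_lower[OF k B M c_def] by simp
    have Vup: "V t \<le> M0 * N t" for t
      unfolding M0_def N_def V_def using Q_upper[OF k g M c] by simp
    have NX: "N t \<le> 3 * X t" "X t \<le> 3 * N t" for t
    proof -
      have eq: "s t + b t - s_in - (s t - sbar) = b t - (s_in - sbar)" by simp
      note de = dist_equiv[where e="s t - sbar" and z="Db t - \<mu> sbar" and y="s t + b t - s_in", unfolded eq]
      show "N t \<le> 3 * X t" "X t \<le> 3 * N t" unfolding N_def X_def mb_def using de by simp_all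
    qed
    have derV: "(V has_real_derivative V' t) (at t) \<and> V' t \<le> - a * V t"
      if t: "0 < t" "t < T" "V t < eps" for t
    proof
      have tT: "t \<in> {0..T}" using t by auto
      have "at t within {0..T} = at t" using t by (intro at_within_Icc_at) auto
      then show "(V has_real_derivative V' t) (at t)" using dV[OF tT] by simp
      define e where "e = s t - sbar"
      define z where "z = Db t - mb"
      define y where "y = s t + b t - s_in"
      have "m0 * N t < m0 * d0^2" using Vlow[of t] t unfolding eps_def by linarith
      then have Nd: "N t < d0^2" using m0 by simp
      have sqb: "\<bar>w\<bar> < d0" if "w^2 < d0^2" for w
      proof -
        have "sqrt (w^2) < sqrt (d0^2)" using that by (simp only: real_sqrt_less_iff)
        then show ?thesis using d0 by simp
      qed
      have N3: "e^2 < d0^2" "z^2 < d0^2" "y^2 < d0^2"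
        using Nd zero_le_power2[of e] zero_le_power2[of z] zero_le_power2[of y]
        unfolding N_def e_def[symmetric] z_def[symmetric] y_def[symmetric] by linarith+
      have he: "\<bar>e\<bar> < d0" by (rule sqb[OF N3(1)])
      have hz: "\<bar>z\<bar> < d0" by (rule sqb[OF N3(2)])
      have hy: "\<bar>y\<bar> < d0" by (rule sqb[OF N3(3)])
      have zG: "\<bar>z - G1*e\<bar> \<le> (1+G1)*d0"
      proof -
        have "\<bar>G1*e\<bar> = G1*\<bar>e\<bar>" using gains by (simp add: abs_mult)
        then have "\<bar>z - G1*e\<bar> \<le> \<bar>z\<bar> + G1*\<bar>e\<bar>" using abs_triangle_ineq4[of z "G1*e"] by linarith
        moreover have "G1*\<bar>e\<bar> \<le> G1*d0" using gains he by simp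
        ultimately show ?thesis using hz by (simp add: algebra_simps)
      qed
      have arg: "Db t - G1*(s t - sbar) = mb + z - G1*e" by (simp add: z_def e_def)
      have Dtt: "Dt t = mb + z - G1*e"
        unfolding Dt_def feedbackD_def arg
        by (rule sat_fix) (use zG d0 in \<open>simp_all add: z_def e_def c1_def c2_def abs_le_iff\<close>)
      have Dge: "Dt t \<ge> Dmin" unfolding Dt_def feedbackD_def
        by (rule sat_ge) (use Dbounds in simp)
      define rh where "rh = \<mu> (s t) - mb - p*e"
      have hrh: "\<bar>rh\<bar> \<le> d1*\<bar>e\<bar>" unfolding rh_def e_def
        by (rule rho) (use sin[OF tT] he d0 in \<open>auto simp: e_def\<close>)
      define Re where "Re = sdv t - (-g*e + B*z - mb*y)"
      have Reeq: "Re = -(mb + p*e + rh)*(B - e + y) + (mb + z - G1*e)*(B - e) - (-(B*(G1+p))*e + B*z - mb*y)"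
        unfolding Re_def sdv_def Dtt rh_def g_def by (simp add: e_def y_def B_def algebra_simps)
      have hRe: "\<bar>Re\<bar> \<le> (L*d1)*\<bar>e\<bar>"
        unfolding Reeq L_def
        by (rule order.trans[OF Re_bound])
           (use hrh he hz hy d0 d1 B in \<open>auto simp: mult.assoc\<close>)
      define Rz where "Rz = Dbd t + k*e"
      have Rzeq: "Rz = - G2 * e * (mb + z - Dmin) * (Dmax - (mb + z)) + G2*(mb - Dmin)*(Dmax - mb) * e"
        unfolding Rz_def Dbd_def k_def c1_def c2_def by (simp add: e_def z_def algebra_simps)
      have hRz: "\<bar>Rz\<bar> \<le> (L2*d1)*\<bar>e\<bar>"
        unfolding Rzeq L2_def c1_def c2_def
        by (rule order.trans[OF Rz_bound])
           (use hz d0 d1 gains in \<open>auto simp: mult.assoc\<close>)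
      have sdeq: "sdv t = -g*e + B*z - mb*y + Re" unfolding Re_def by simp
      have Dbdeq: "Dbd t = -k*e + Rz" unfolding Rz_def by simp
      have bdeq: "bdv t = -(Dt t)*y - sdv t"
        unfolding bdv_def sdv_def y_def by (simp add: algebra_simps)
      have V'eq: "V' t = 2*k*e*(-g*e + B*z - mb*y + Re) - g*((-g*e + B*z - mb*y + Re)*z + e*(-k*e + Rz))
          + 2*c*z*(-k*e+Rz) + 2*M*y*(-(Dt t)*y)"
        unfolding V'_def bdeq sdeq Dbdeq e_def[symmetric] z_def[symmetric] y_def[symmetric]
        by (simp add: algebra_simps)
      have th: "(2*k+g/2)*(L*d1) + (g+c)*(L2*d1) \<le> k*g/4" "(2*k+g/2)*(L*d1) + (g+c)*(L2*d1) \<le> g*B/4"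
        unfolding Kd1 using d1(3) unfolding th0_def by (simp_all add: mult.commute)
      have "V' t \<le> -(k*g/2)*e^2 - (g*B/2)*z^2 - y^2"
        unfolding V'eq
        by (rule Qderiv_bound[OF k g B Dbounds(1) mb c_def hM Dge hRe hRz _ _ th])
           (use L L2 d1 in simp_all)
      also have "\<dots> \<le> - a0 * N t"
      proof -
        have "a0*e^2 \<le> (k*g/2)*e^2" "a0*z^2 \<le> (g*B/2)*z^2" "a0*y^2 \<le> 1*y^2"
          unfolding a0_def by (intro mult_right_mono; simp)+
        then show ?thesis unfolding N_def e_def[symmetric] z_def[symmetric] y_def[symmetric]
          by (simp add: algebra_simps)
      qed
      also have "\<dots> \<le> - a * V t"
      proof -
        have "a * V t \<le> a * (M0 * N t)" using Vup[of t] a by (simp add: mult_left_mono)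
        also have "\<dots> = a0 * N t" unfolding a_def using M0 by simp
        finally show ?thesis by simp
      qed
      finally show "V' t \<le> - a * V t" .
    qed
    have X0: "X 0 < del^2"
    proof -
      have "sqrt (X 0) < del" using start eqd by simp
      moreover have "X 0 \<ge> 0" unfolding X_def by simp
      ultimately show ?thesis using del by (metis real_sqrt_less_iff real_sqrt_pow2 real_sqrt_ge_zero power_strict_mono zero_less_numeral)
    qed
    have del2: "del^2 = eps / (3*M0)" unfolding del_def using eps M0 by simp
    have V0: "V 0 < eps"
    proof -
      have "V 0 \<le> M0 * (3 * X 0)" using Vup[of 0] NX(1)[of 0] M0 by (smt (verit) mult_left_mono)
      also have "\<dots> < M0 * (3 * (eps / (3*M0)))" using X0 del2 M0 by (intro mult_strict_left_mono) auto
      finally show ?thesis using M0 by simp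
    qed
    have V0p: "V 0 \<ge> 0" using Vlow[of 0] m0 unfolding N_def by (smt (verit) zero_le_mult_iff zero_le_power2)
    have dec: "\<forall>t\<in>{0..T}. V t \<le> V 0 * exp (- a * t)"
      by (rule decay[OF contV derV V0p V0]) (use a in auto)
    show ?thesis
    proof
      fix t assume tT: "t \<in> {0..T}"
      have "X t \<le> 3 * N t" by (rule NX(2))
      also have "\<dots> \<le> 3 * (V t / m0)" using Vlow[of t] m0 by (simp add: field_simps)
      also have "\<dots> \<le> 3 * (V 0 * exp (- a * t) / m0)" using dec tT m0 by (simp add: divide_right_mono)
      also have "\<dots> \<le> 3 * (M0 * (3 * X 0) * exp (- a * t) / m0)"
      proof -
        have "V 0 \<le> M0 * (3 * X 0)" using Vup[of 0] NX(1)[of 0] M0 by (smt (verit) mult_left_mono)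
        then show ?thesis using m0 by (simp add: divide_right_mono mult_right_mono)
      qed
      also have "\<dots> = (C * exp (- r * t) * sqrt (X 0))^2"
      proof -
        have "exp (- r * t)^2 = exp (- a * t)" unfolding r_def power2_eq_square exp_add[symmetric] by simp
        moreover have "C^2 = 9 * (M0/m0)" unfolding C_def using M0 m0 by (simp add: power_mult_distrib)
        moreover have "(sqrt (X 0))^2 = X 0" unfolding X_def by simp
        ultimately show ?thesis by (simp add: power_mult_distrib field_simps)
      qed
      finally have "X t \<le> (C * exp (- r * t) * sqrt (X 0))^2" .
      then have "sqrt (X t) \<le> sqrt ((C * exp (- r * t) * sqrt (X 0))^2)" by (rule real_sqrt_le_mono)
      also have "\<dots> = C * exp (- r * t) * sqrt (X 0)"
        using C by (simp add: X_def abs_mult)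
      finally show "eq_dist \<mu> s_in sbar s b Db t \<le> C * exp (- r * t) * eq_dist \<mu> s_in sbar s b Db 0"
        unfolding eqd .
    qed
  qed

  show ?thesis
  proof
    show "cl_locally_exp_stable \<mu> s_in sbar Dmin Dmax G1 G2"
      unfolding cl_locally_exp_stable_def
      by (intro exI[of _ del] exI[of _ C] exI[of _ r] conjI del C r allI impI)
         (use key in blast)
    show "\<exists>\<delta>>0. \<forall>s b Db.
       (\<forall>T\<ge>0. cl_solution \<mu> s_in sbar Dmin Dmax G1 G2 T s b Db) \<and>
       eq_dist \<mu> s_in sbar s b Db 0 < \<delta> \<longrightarrow>
       (s \<longlongrightarrow> sbar) at_top \<and> (Db \<longlongrightarrow> \<mu> sbar) at_top \<and>
       ((\<lambda>t. feedbackD Dmin Dmax G1 sbar (s t) (Db t)) \<longlongrightarrow> \<mu> sbar) at_top"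
    proof (intro exI[of _ del] conjI del allI impI)
      fix s b Db
      assume H: "(\<forall>T\<ge>0. cl_solution \<mu> s_in sbar Dmin Dmax G1 G2 T s b Db) \<and>
        eq_dist \<mu> s_in sbar s b Db 0 < del"
      define d where "d t = eq_dist \<mu> s_in sbar s b Db t" for t
      have bound: "d t \<le> C * exp (- r * t) * d 0" if "t \<ge> 0" for t
        using key[of t s b Db] H that unfolding d_def by auto
      have "filterlim (\<lambda>t. r * t) at_top at_top"
        by (rule filterlim_tendsto_pos_mult_at_top[OF tendsto_const r filterlim_ident])
      then have "filterlim (\<lambda>t. - (r * t)) at_bot at_top"
        by (simp add: filterlim_uminus_at_top)
      then have "((\<lambda>t. exp (- (r * t))) \<longlongrightarrow> 0) at_top"
        by (rule filterlim_compose[OF exp_at_bot])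
      then have lim0: "((\<lambda>t. (1+G1) * (C * exp (- r * t) * d 0)) \<longlongrightarrow> 0) at_top"
        by (auto intro!: tendsto_mult_right_zero tendsto_mult_left_zero)
      have ev: "eventually (\<lambda>t::real. t \<ge> 0) at_top" by (rule eventually_ge_at_top)
      have sq: "\<bar>x\<bar> \<le> sqrt (x^2 + y^2 + z^2)" "\<bar>z\<bar> \<le> sqrt (x^2 + y^2 + z^2)" for x y z :: real
      proof -
        have "sqrt (x^2) \<le> sqrt (x^2 + y^2 + z^2)" "sqrt (z^2) \<le> sqrt (x^2 + y^2 + z^2)"
          by (intro real_sqrt_le_mono; simp)+
        then show "\<bar>x\<bar> \<le> sqrt (x^2 + y^2 + z^2)" "\<bar>z\<bar> \<le> sqrt (x^2 + y^2 + z^2)" by simp_all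
      qed
      have es: "\<bar>s t - sbar\<bar> \<le> d t" for t unfolding d_def eq_dist_def by (rule sq(1))
      have ez: "\<bar>Db t - \<mu> sbar\<bar> \<le> d t" for t unfolding d_def eq_dist_def by (rule sq(2))
      have dpos: "d t \<ge> 0" for t unfolding d_def eq_dist_def by simp
      have G1: "1 \<le> 1 + G1" using gains by simp
      have b1: "\<bar>s t - sbar\<bar> \<le> (1+G1) * (C * exp (- r * t) * d 0)" if "t \<ge> 0" for t
      proof -
        have "\<bar>s t - sbar\<bar> \<le> C * exp (- r * t) * d 0" using es[of t] bound[OF that] by linarith
        also have "\<dots> \<le> (1+G1) * (C * exp (- r * t) * d 0)"
        proof -
          have "0 \<le> G1 * (C * exp (- r * t) * d 0)" using gains C dpos[of 0] by simp
          then show ?thesis by (simp add: algebra_simps)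
        qed
        finally show ?thesis .
      qed
      have b2: "\<bar>Db t - \<mu> sbar\<bar> \<le> (1+G1) * (C * exp (- r * t) * d 0)" if "t \<ge> 0" for t
      proof -
        have "\<bar>Db t - \<mu> sbar\<bar> \<le> C * exp (- r * t) * d 0" using ez[of t] bound[OF that] by linarith
        also have "\<dots> \<le> (1+G1) * (C * exp (- r * t) * d 0)"
        proof -
          have "0 \<le> G1 * (C * exp (- r * t) * d 0)" using gains C dpos[of 0] by simp
          then show ?thesis by (simp add: algebra_simps)
        qed
        finally show ?thesis .
      qed
      have b3: "\<bar>feedbackD Dmin Dmax G1 sbar (s t) (Db t) - \<mu> sbar\<bar> \<le> (1+G1) * (C * exp (- r * t) * d 0)"
        if "t \<ge> 0" for t
      proof -
        have satfix: "sat Dmin Dmax (\<mu> sbar) = \<mu> sbar" using Dbounds by (intro sat_fix) auto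
        have "\<bar>feedbackD Dmin Dmax G1 sbar (s t) (Db t) - \<mu> sbar\<bar>
              = \<bar>sat Dmin Dmax (Db t - G1 * (s t - sbar)) - sat Dmin Dmax (\<mu> sbar)\<bar>"
          unfolding feedbackD_def satfix ..
        also have "\<dots> \<le> \<bar>(Db t - G1 * (s t - sbar)) - \<mu> sbar\<bar>" using Dbounds by (intro sat_lip) auto
        also have "\<dots> \<le> \<bar>Db t - \<mu> sbar\<bar> + G1 * \<bar>s t - sbar\<bar>"
        proof -
          have "\<bar>G1 * (s t - sbar)\<bar> = G1 * \<bar>s t - sbar\<bar>" using gains by (simp add: abs_mult)
          then show ?thesis using abs_triangle_ineq4[of "Db t - \<mu> sbar" "G1 * (s t - sbar)"] by (simp add: algebra_simps)
        qed
        also have "\<dots> \<le> d t + G1 * d t" using es[of t] ez[of t] gains by (simp add: mult_left_mono add_mono)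
        also have "\<dots> = (1+G1) * d t" by (simp add: algebra_simps)
        also have "\<dots> \<le> (1+G1) * (C * exp (- r * t) * d 0)" using bound[OF that] gains by (simp add: mult_left_mono)
        finally show ?thesis .
      qed
      show "(s \<longlongrightarrow> sbar) at_top"
        by (rule LIM_zero_cancel, rule Lim_null_comparison[OF _ lim0])
           (use eventually_mono[OF ev b1] in simp)
      show "(Db \<longlongrightarrow> \<mu> sbar) at_top"
        by (rule LIM_zero_cancel, rule Lim_null_comparison[OF _ lim0])
           (use eventually_mono[OF ev b2] in simp)
      show "((\<lambda>t. feedbackD Dmin Dmax G1 sbar (s t) (Db t)) \<longlongrightarrow> \<mu> sbar) at_top"
        by (rule LIM_zero_cancel, rule Lim_null_comparison[OF _ lim0])
           (use eventually_mono[OF ev b3] in simp)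
    qed
  qed

qed
end
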